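(* Let $n\ge2$, $k\ge1$, and let $\partial_k$ denote the distance in $H_{n,k}$. For every vertex $\mathbf x=x_1\ldots x_k$ of $H_{n,k}$: $$\partial_k(\mathbf x,\mathbf r)\le\begin{cases}k-1&\text{if }x_1=0,\\ k&\text{otherwise,}\end{cases}\qquad \partial_k(\mathbf x,P)\le\begin{cases}k&\text{if }x_1=0,\\ k-1&\text{otherwise.}\end{cases}$$
   Context: Let $n\ge 2$ and $k\ge 1$ be integers. $H_{n,k}$ is the simple undirected graph with vertex set $V_{n,k}=\mathbb{Z}_n^k$ (so $|V_{n,k}|=n^k$), whose vertices are written as strings $x_1x_2\ldots x_k$ with $x_j\in\mathbb{Z}_n=\{0,1,\ldots,n-1\}$. Two distinct vertices are adjacent if and only if they are related by one of the following rules. For $i=0$ the prefix $x_1\ldots x_i$ is empty, and "$0\ldots0$" denotes a string of zeros completing the word to length $k$. (R1) $x_1\ldots x_{k-1}x_k\sim x_1\ldots x_{k-1}y_k$ whenever $y_k\neq x_k$. (R2) For $0\le i\le k-2$: $x_1\ldots x_i0\ldots0\sim x_1\ldots x_ix_{i+1}\ldots x_k$ whenever $x_j\neq 0$ for all $i+1\le j\le k$. (R3) For $1\le i\le k-1$: $x_1\ldots x_{i-1}x_i0\ldots0\sim x_1\ldots x_{i-1}y_i0\ldots0$ whenever $x_i,y_i\neq0$ and $x_i\ne y_i$. In particular, $H_{n,1}$ is the complete graph $K_n$. The root of $H_{n,k}$ is $\mathbf r=00\ldots0$; a vertex of $H_{n,k}$ is peripheral if all its coordinates are nonzero, and $P$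 denotes the set of peripheral vertices. For a vertex $\mathbf x$ and a vertex set $U$, $\partial(\mathbf x,U)=\min_{\mathbf u\in U}\partial(\mathbf x,\mathbf u)$. *)

theory Defs
  imports Main "HOL-Library.Extended_Nat"
begin

text \<open>Vertices of H_{n,k}: words x_1...x_k over Z_n = {0,...,n-1}, represented as
  lists of length k; coordinate x_j is the list entry at index j-1.\<close>

definition hverts :: "nat \<Rightarrow> nat \<Rightarrow> nat list set" where
  "hverts n k = {xs. length xs = k \<and> set xs \<subseteq> {..<n}}"

definition hR1 :: "nat \<Rightarrow> nat list \<Rightarrow> nat list \<Rightarrow> bool" where
  "hR1 k u v \<longleftrightarrow> take (k - 1) u = take (k - 1) v"

definition hR2 :: "nat \<Rightarrow> nat list \<Rightarrow> nat list \<Rightarrow> bool" where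
  "hR2 k u v \<longleftrightarrow> (\<exists>i. i + 2 \<le> k \<and> u = take i v @ replicate (k - i) 0
      \<and> (\<forall>j. i \<le> j \<and> j < k \<longrightarrow> v ! j \<noteq> 0))"

text \<open>(R3): u = x_1..x_{i-1} x_i 0..0 and v = x_1..x_{i-1} y_i 0..0 with x_i, y_i nonzero,
  where 1 <= i <= k-1 (distinctness of x_i, y_i comes from u \<noteq> v).\<close>
definition hR3 :: "nat \<Rightarrow> nat list \<Rightarrow> nat list \<Rightarrow> bool" where
  "hR3 k u v \<longleftrightarrow> (\<exists>i. 1 \<le> i \<and> i \<le> k - 1 \<and> take (i - 1) u = take (i - 1) v
      \<and> u ! (i - 1) \<noteq> 0 \<and> v ! (i - 1) \<noteq> 0
      \<and> drop i u = replicate (k - i) 0 \<and> drop i v = replicate (k - i) 0)"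

definition hadj :: "nat \<Rightarrow> nat \<Rightarrow> nat list \<Rightarrow> nat list \<Rightarrow> bool" where
  "hadj n k u v \<longleftrightarrow> u \<in> hverts n k \<and> v \<in> hverts n k \<and> u \<noteq> v \<and>
     (hR1 k u v \<or> hR2 k u v \<or> hR2 k v u \<or> hR3 k u v)"

definition hwalk :: "nat \<Rightarrow> nat \<Rightarrow> nat list list \<Rightarrow> bool" where
  "hwalk n k p \<longleftrightarrow> p \<noteq> [] \<and> set p \<subseteq> hverts n k \<and>
     (\<forall>i. Suc i < length p \<longrightarrow> hadj n k (p ! i) (p ! Suc i))"

text \<open>Graph distance (infinite if no walk exists).\<close>
definition hdist :: "nat \<Rightarrow> nat \<Rightarrow> nat list \<Rightarrow> nat list \<Rightarrow> enat" where
  "hdist n k x y = Inf {enat (length p - 1) | p. hwalk n k p \<and> hd p = x \<and> last p = y}"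

definition hsetdist :: "nat \<Rightarrow> nat \<Rightarrow> nat list \<Rightarrow> nat list set \<Rightarrow> enat" where
  "hsetdist n k x U = Inf (hdist n k x ` U)"

definition hroot :: "nat \<Rightarrow> nat list" where
  "hroot k = replicate k 0"

definition hperiph :: "nat \<Rightarrow> nat \<Rightarrow> nat list set" where
  "hperiph n k = {x \<in> hverts n k. \<forall>j < k. x ! j \<noteq> 0}"

end

theory Submission
  imports Defs
begin

inductive reachI :: "nat \<Rightarrow> nat \<Rightarrow> nat \<Rightarrow> nat list \<Rightarrow> nat list \<Rightarrow> bool" for n k where
  rrefl: "x \<in> hverts n k \<Longrightarrow> reachI n k 0 x x"
| rstep: "reachI n k m x y \<Longrightarrow> hadj n k y z \<Longrightarrow> reachI n k (Suc m) x z"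

lemma reach_walk: "reachI n k m x y \<Longrightarrow> \<exists>p. hwalk n k p \<and> hd p = x \<and> last p = y \<and> length p = Suc m"
proof (induction rule: reachI.induct)
  case (rrefl x)
  then show ?case by (intro exI[of _ "[x]"]) (auto simp: hwalk_def)
next
  case (rstep m x y z)
  then obtain p where p: "hwalk n k p" "hd p = x" "last p = y" "length p = Suc m" by blast
  have zv: "z \<in> hverts n k" using rstep(2) by (simp add: hadj_def)
  have "hwalk n k (p @ [z])"
    unfolding hwalk_def
  proof (intro conjI allI impI)
    show "p @ [z] \<noteq> []" by simp
    show "set (p @ [z]) \<subseteq> hverts n k" using p(1) zv by (auto simp: hwalk_def)
  next
    fix i assume i: "Suc i < length (p @ [z])"
    show "hadj n k ((p @ [z]) ! i) ((p @ [z]) ! Suc i)"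
    proof (cases "Suc i < length p")
      case True
      then show ?thesis using p(1) by (simp add: hwalk_def nth_append)
    next
      case False
      then have "i = length p - 1" using i by simp
      moreover have "p ! (length p - 1) = y" using p by (metis last_conv_nth list.size(3) nat.distinct(1))
      ultimately show ?thesis using rstep(2) p(4) by (simp add: nth_append)
    qed
  qed
  moreover have "hd (p @ [z]) = hd p" using p(4) by (cases p) auto
  ultimately show ?case using p by (intro exI[of _ "p @ [z]"]) auto
qed

lemma reach_dist: "reachI n k m x y \<Longrightarrow> m \<le> b \<Longrightarrow> hdist n k x y \<le> enat b"
proof -
  assume r: "reachI n k m x y" and mb: "m \<le> b"
  from reach_walk[OF r] obtain p where p: "hwalk n k p" "hd p = x" "last p = y" "length p = Suc m" by blast
  have "hdist n k x y \<le> enat (length p - 1)"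
    unfolding hdist_def by (rule Inf_lower) (use p in blast)
  also have "\<dots> \<le> enat b" using p(4) mb by simp
  finally show ?thesis .
qed

lemma hadj_lift:
  assumes "hadj n k y z" "a < n"
  shows "hadj n (Suc k) (a # y) (a # z)"
proof -
  have yz: "y \<in> hverts n k" "z \<in> hverts n k" "y \<noteq> z" using assms by (auto simp: hadj_def)
  have k1: "k \<ge> 1" using yz by (cases k) (auto simp: hverts_def)
  have v: "a # y \<in> hverts n (Suc k)" "a # z \<in> hverts n (Suc k)"
    using yz assms(2) by (auto simp: hverts_def)
  have "hR1 (Suc k) (a#y) (a#z) \<or> hR2 (Suc k) (a#y) (a#z) \<or> hR2 (Suc k) (a#z) (a#y) \<or> hR3 (Suc k) (a#y) (a#z)"
  proof -
    have c: "hR1 k y z \<or> hR2 k y z \<or> hR2 k z y \<or> hR3 k y z" using assms(1) by (simp add: hadj_def)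
    have A: "hR1 k y z \<Longrightarrow> hR1 (Suc k) (a#y) (a#z)"
      using k1 by (cases k) (auto simp: hR1_def)
    have B: "hR2 k u v \<Longrightarrow> hR2 (Suc k) (a#u) (a#v)" for u v
    proof -
      assume "hR2 k u v"
      then obtain i where i: "i + 2 \<le> k" "u = take i v @ replicate (k - i) 0"
        "\<forall>j. i \<le> j \<and> j < k \<longrightarrow> v ! j \<noteq> 0" by (auto simp: hR2_def)
      show ?thesis unfolding hR2_def
      proof (intro exI[of _ "Suc i"] conjI allI impI)
        show "Suc i + 2 \<le> Suc k" using i by simp
        show "a # u = take (Suc i) (a # v) @ replicate (Suc k - Suc i) 0" using i by simp
      next
        fix j assume "Suc i \<le> j \<and> j < Suc k"
        then show "(a # v) ! j \<noteq> 0" using i(3) by (cases j) auto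
      qed
    qed
    have C: "hR3 k y z \<Longrightarrow> hR3 (Suc k) (a#y) (a#z)"
    proof -
      assume "hR3 k y z"
      then obtain i where i: "1 \<le> i" "i \<le> k - 1" "take (i - 1) y = take (i - 1) z"
        "y ! (i - 1) \<noteq> 0" "z ! (i - 1) \<noteq> 0"
        "drop i y = replicate (k - i) 0" "drop i z = replicate (k - i) 0"
        by (auto simp: hR3_def)
      show ?thesis unfolding hR3_def
        apply (rule exI[of _ "Suc i"])
        using i k1 by (cases i) auto
    qed
    show ?thesis using c A B C by blast
  qed
  then show ?thesis using v yz by (simp add: hadj_def)
qed

lemma reach_lift: "reachI n k m y z \<Longrightarrow> a < n \<Longrightarrow> reachI n (Suc k) m (a # y) (a # z)"
proof (induction rule: reachI.induct)
  case (rrefl x)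
  then show ?case by (intro reachI.rrefl) (auto simp: hverts_def)
next
  case (rstep m x y z)
  then show ?case using hadj_lift by (blast intro: reachI.rstep)
qed

lemma ones_adj:
  assumes "n \<ge> 2" "k \<ge> 1"
  shows "hadj n k (hroot k) (replicate k 1)"
proof -
  have v: "hroot k \<in> hverts n k" "replicate k 1 \<in> hverts n k" using assms
    by (auto simp: hverts_def hroot_def)
  have ne: "hroot k \<noteq> replicate k 1" using assms(2) by (cases k) (auto simp: hroot_def)
  have "hR1 k (hroot k) (replicate k 1) \<or> hR2 k (hroot k) (replicate k 1)"
  proof (cases "k = 1")
    case True then show ?thesis by (simp add: hR1_def)
  next
    case False
    then have "hR2 k (hroot k) (replicate k 1)" unfolding hR2_def hroot_def
      using assms(2) by (intro exI[of _ 0]) auto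
    then show ?thesis by blast
  qed
  then show ?thesis using v ne by (auto simp: hadj_def)
qed

lemma ones_periph: "n \<ge> 2 \<Longrightarrow> replicate k 1 \<in> hperiph n k"
  by (auto simp: hperiph_def hverts_def)

lemma main_aux:
  assumes n2: "n \<ge> 2"
  shows "x \<in> hverts n (Suc m) \<Longrightarrow>
     (\<exists>d. d \<le> (if x ! 0 = 0 then m else Suc m) \<and> reachI n (Suc m) d x (hroot (Suc m)))
   \<and> (\<exists>p d. p \<in> hperiph n (Suc m) \<and> d \<le> (if x ! 0 = 0 then Suc m else m) \<and> reachI n (Suc m) d x p)"
proof (induction m arbitrary: x)
  case 0
  then obtain a where x: "x = [a]" "a < n" by (auto simp: hverts_def length_Suc_conv)
  have r0: "[0] \<in> hverts n 1" "[1] \<in> hverts n 1" using n2 by (auto simp: hverts_def)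
  have p1: "[1] \<in> hperiph n 1" using n2 by (auto simp: hperiph_def hverts_def)
  show ?case
  proof (cases "a = 0")
    case True
    have "hadj n 1 [0] [1]" using r0 by (simp add: hadj_def hR1_def)
    then have "reachI n 1 1 [0] [1]" using r0 reachI.rstep[OF reachI.rrefl] by (metis One_nat_def)
    then show ?thesis using True x r0 p1
      by (auto simp: hroot_def intro: reachI.intros)
  next
    case False
    have "hadj n 1 [a] [0]" using r0 0 x False by (simp add: hadj_def hR1_def)
    then have "reachI n 1 1 [a] [0]" using 0 x reachI.rstep[OF reachI.rrefl] by (metis One_nat_def)
    moreover have "[a] \<in> hperiph n 1" using 0 x False by (auto simp: hperiph_def)
    ultimately show ?thesis using False x 0
      by (auto simp: hroot_def intro: reachI.intros)
  qed
next
  case (Suc m)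
  then obtain a y where x: "x = a # y" "a < n" "y \<in> hverts n (Suc m)"
    by (auto simp: hverts_def length_Suc_conv)
  from Suc.IH[OF x(3)] obtain d1 p d2 where
    d1: "d1 \<le> Suc m" "reachI n (Suc m) d1 y (hroot (Suc m))" and
    p: "p \<in> hperiph n (Suc m)" "d2 \<le> Suc m" "reachI n (Suc m) d2 y p"
    by (auto split: if_splits) (meson le_SucI)+
  have rt: "hroot (Suc (Suc m)) = 0 # hroot (Suc m)" by (simp add: hroot_def)
  have adj1: "hadj n (Suc (Suc m)) (hroot (Suc (Suc m))) (replicate (Suc (Suc m)) 1)"
    using ones_adj[OF n2, of "Suc (Suc m)"] by simp
  show ?case
  proof (cases "a = 0")
    case True
    have r: "reachI n (Suc (Suc m)) d1 x (hroot (Suc (Suc m)))"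
      using reach_lift[OF d1(2) x(2)] x True rt by simp
    then have "reachI n (Suc (Suc m)) (Suc d1) x (replicate (Suc (Suc m)) 1)"
      using adj1 by (blast intro: reachI.intros)
    then show ?thesis using r d1 True x ones_periph[OF n2, of "Suc (Suc m)"]
      by (intro conjI exI[of _ d1] exI[of _ "replicate (Suc (Suc m)) 1"] exI[of _ "Suc d1"]) auto
  next
    case False
    have r: "reachI n (Suc (Suc m)) d2 x (a # p)" using reach_lift[OF p(3) x(2)] x by simp
    have pp: "a # p \<in> hperiph n (Suc (Suc m))"
      using p(1) x False by (auto simp: hperiph_def hverts_def nth_Cons split: nat.splits)
    have "hR2 (Suc (Suc m)) (hroot (Suc (Suc m))) (a # p)"
      unfolding hR2_def hroot_def
      using pp by (intro exI[of _ 0]) (auto simp: hperiph_def hverts_def)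
    then have "hadj n (Suc (Suc m)) (a # p) (hroot (Suc (Suc m)))"
      using pp adj1 False by (auto simp: hadj_def hperiph_def hroot_def)
    then have "reachI n (Suc (Suc m)) (Suc d2) x (hroot (Suc (Suc m)))"
      using r by (blast intro: reachI.intros)
    then show ?thesis using r pp p(2) False x by auto
  qed
qed

theorem mainTheorem6:
  fixes n k :: nat and x :: "nat list"
  assumes "n \<ge> 2" and "k \<ge> 1" and "x \<in> hverts n k"
  shows "hdist n k x (hroot k) \<le> enat (if x ! 0 = 0 then k - 1 else k)
       \<and> hsetdist n k x (hperiph n k) \<le> enat (if x ! 0 = 0 then k else k - 1)"
proof -
  obtain m where k: "k = Suc m" using assms(2) by (cases k) auto
  from main_aux[OF assms(1), of x m] assms(3) k obtain d1 p d2 where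
    d1: "d1 \<le> (if x ! 0 = 0 then m else Suc m)" "reachI n k d1 x (hroot k)" and
    p: "p \<in> hperiph n k" "d2 \<le> (if x ! 0 = 0 then Suc m else m)" "reachI n k d2 x p"
    by blast
  have 1: "hdist n k x (hroot k) \<le> enat (if x ! 0 = 0 then k - 1 else k)"
    by (rule reach_dist[OF d1(2)]) (use d1(1) k in auto)
  have "hsetdist n k x (hperiph n k) \<le> hdist n k x p"
    unfolding hsetdist_def by (rule INF_lower[OF p(1)])
  also have "\<dots> \<le> enat (if x ! 0 = 0 then k else k - 1)"
    by (rule reach_dist[OF p(3)]) (use p(2) k in auto)
  finally show ?thesis using 1 by blast
qed

end
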